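(* Let $A=(a_{i,k})_{0\le i,k\le d-1}\in\mathbb{Z}^{d\times d}$ be an idealizing matrix. Then for every $1\le j\le d-1$, $a_{j,j}$ divides $a_{i,k}$ for all $0\le i,k\le j$.
   Context: An idealizing matrix is an upper triangular integer matrix $A=(a_{i,k})_{0\le i,k\le d-1}$ with nonzero diagonal entries such that, for each $0\le j\le d-2$, the vector obtained by shifting the $j$-th column down by one, namely $(0,a_{0,j},a_{1,j},\dots,a_{d-2,j})^T$, lies in the $\mathbb{Z}$-span of columns $0,1,\dots,j+1$ of $A$. (Columns are indexed from $0$; the $j$-th column represents the coefficient vector of a polynomial of degree $j$.) *)

theory Defs
  imports Main
begin

text \<open>A d x d integer matrix is represented as a function A :: nat => nat => int,
  where A i k is the entry in row i, column k, for 0 <= i, k <= d - 1.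
  Entries outside this range are irrelevant.\<close>

definition shift_col :: "(nat \<Rightarrow> nat \<Rightarrow> int) \<Rightarrow> nat \<Rightarrow> nat \<Rightarrow> int" where
  "shift_col A j i = (if i = 0 then 0 else A (i - 1) j)"

definition idealizing :: "nat \<Rightarrow> (nat \<Rightarrow> nat \<Rightarrow> int) \<Rightarrow> bool" where
  "idealizing d A \<longleftrightarrow>
     (\<forall>i<d. \<forall>k<d. k < i \<longrightarrow> A i k = 0) \<and>
     (\<forall>i<d. A i i \<noteq> 0) \<and>
     (\<forall>j. j + 2 \<le> d \<longrightarrow>
        (\<exists>c :: nat \<Rightarrow> int. \<forall>i<d. shift_col A j i = (\<Sum>m\<le>j+1. c m * A i m)))"

end

theory Submission
  imports Defs
begin

lemma step_lemma:
  fixes d :: nat and A :: "nat \<Rightarrow> nat \<Rightarrow> int"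
  assumes ide: "idealizing d A" and jd: "j + 2 \<le> d"
    and IH: "\<forall>i\<le>j. \<forall>k\<le>j. A j j dvd A i k"
  shows "\<forall>i\<le>Suc j. \<forall>k\<le>Suc j. A (Suc j) (Suc j) dvd A i k"
proof -
  have I: "(\<forall>i<d. \<forall>k<d. k < i \<longrightarrow> A i k = 0)" "(\<forall>i<d. A i i \<noteq> 0)"
     "(\<forall>j. j + 2 \<le> d \<longrightarrow>
        (\<exists>c :: nat \<Rightarrow> int. \<forall>i<d. shift_col A j i = (\<Sum>m\<le>j+1. c m * A i m)))"
    using ide unfolding idealizing_def by simp_all
  have tri: "\<And>i k. i < d \<Longrightarrow> k < i \<Longrightarrow> A i k = 0" using I(1) by simp
  have nz: "\<And>i. i < d \<Longrightarrow> A i i \<noteq> 0" using I(2) by simp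
  obtain c :: "nat \<Rightarrow> int" where c: "\<forall>i<d. shift_col A j i = (\<Sum>m\<le>j+1. c m * A i m)"
    using I(3) jd by blast
  have split: "\<And>i. (\<Sum>m\<le>j+1. c m * A i m) = (\<Sum>m\<le>j. c m * A i m) + c (Suc j) * A i (Suc j)"
    by simp
  have z: "(\<Sum>m\<le>j. c m * A (Suc j) m) = 0"
    by (rule sum.neutral) (use tri jd in auto)
  have "shift_col A j (Suc j) = (\<Sum>m\<le>j+1. c m * A (Suc j) m)" using c jd by auto
  hence diag: "A j j = c (Suc j) * A (Suc j) (Suc j)"
    using split[of "Suc j"] z by (simp add: shift_col_def)
  have ajj: "A j j \<noteq> 0" using nz jd by auto
  hence cnz: "c (Suc j) \<noteq> 0" using diag by auto
  have d1: "A (Suc j) (Suc j) dvd A j j" using diag by simp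
  have newcol: "A (Suc j) (Suc j) dvd A i (Suc j)" if "i \<le> Suc j" for i
  proof -
    have eq: "shift_col A j i = (\<Sum>m\<le>j. c m * A i m) + c (Suc j) * A i (Suc j)"
      using c that jd split[of i] by auto
    have s1: "A j j dvd shift_col A j i"
      using IH that by (auto simp: shift_col_def)
    have s2: "A j j dvd (\<Sum>m\<le>j. c m * A i m)"
    proof (cases "i \<le> j")
      case True
      then show ?thesis using IH by (intro dvd_sum) auto
    next
      case False
      then have "i = Suc j" using that by auto
      then show ?thesis using z by simp
    qed
    have "A j j dvd c (Suc j) * A i (Suc j)"
      using s1 s2 eq by (metis add_diff_cancel_left' dvd_diff)
    hence "c (Suc j) * A (Suc j) (Suc j) dvd c (Suc j) * A i (Suc j)" using diag by simp
    thus ?thesis using cnz by simp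
  qed
  show ?thesis
  proof (intro allI impI)
    fix i k assume i: "i \<le> Suc j" and k: "k \<le> Suc j"
    show "A (Suc j) (Suc j) dvd A i k"
    proof (cases "k = Suc j")
      case True thus ?thesis using newcol i by simp
    next
      case False
      hence kj: "k \<le> j" using k by auto
      show ?thesis
      proof (cases "i = Suc j")
        case True thus ?thesis using tri[of i k] kj jd by simp
      next
        case False
        hence "i \<le> j" using i by auto
        thus ?thesis using IH kj d1 dvd_trans by blast
      qed
    qed
  qed
qed

lemma allj:
  fixes d :: nat and A :: "nat \<Rightarrow> nat \<Rightarrow> int"
  assumes ide: "idealizing d A"
  shows "j < d \<Longrightarrow> \<forall>i\<le>j. \<forall>k\<le>j. A j j dvd A i k"
proof (induction j)
  case 0
  then show ?case by simp
next
  case (Suc j)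
  then show ?case using step_lemma[OF ide, of j] by simp
qed

theorem mainTheorem5:
  fixes d :: nat and A :: "nat \<Rightarrow> nat \<Rightarrow> int"
  assumes "idealizing d A"
  shows "\<forall>j. 1 \<le> j \<and> j \<le> d - 1 \<longrightarrow> (\<forall>i\<le>j. \<forall>k\<le>j. A j j dvd A i k)"
proof (rule allI, rule impI)
  fix j assume "1 \<le> j \<and> j \<le> d - 1"
  hence "j < d" by auto
  thus "\<forall>i\<le>j. \<forall>k\<le>j. A j j dvd A i k" using allj[OF assms] by blast
qed

end
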